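(* Let $A\subset\mathcal{N}=\omega^\omega$, let $\mathcal{F}=\mathcal{F}_A$ be the family of all closed and discrete subsets of $A$, let $\{T_a : a\in A\}$ be an $(A,\mathcal{F})$-Reznichenko family of trees, $\mathcal{T}=\bigcup_{a\in A}T_a$, and let $R[\mathcal{F}]\subset 2^{\mathcal{T}}$ be the associated compact set. Then there exists no determining function (for $R[\mathcal{F}]\subset\mathbb{R}^{\mathcal{T}}$) $f:\mathcal{T}\to A$.
   Context: A tree is a partially ordered set $(T,\leq)$ in which for each $t$ the set $\{s: s<t\}$ is well ordered and which has a minimum, the root. An immediate successor of $t$ is a node $s>t$ with no $r$ satisfying $t<r<s$. The height is the least ordinal $\alpha$ such that no node has predecessor set of order type $\alpha$. A segment is a set $S\subset T$ of pairwise comparable elements such that $t\leq r\leq s$ with $t,s\in S$ implies $r\in S$; it is initial if it contains the root. For a set $A$ with $|A|\leq\mathfrak{c}$ and a hereditary family $\mathcal{F}$ of subsets of $A$, an $(A,\mathcal{F})$-Reznichenko family of trees is a family $\{T_a:a\in A\}$ of trees such that: (1) each $T_a$ has height $\omega$ and every node has $\mathfrak{c}$ many immediate successors; (2) $T_a\cap A=\{a\}$ and $a$ is the root of $T_a$; (3) for every $t\in\bigcup_a T_a$, $\{a\in A: t\in T_a\}\in\mathcal{F}$; (4) for $a\neq b$ and segments $S\subset T_a$, $S'\subset T_b$, $|S\cap S'|\leq 1$; (5) for every $B\in\mathcal{F}$ and every disjoint family $\{S_b:b\in B\}$ with $S_b$ a finite initial segment of $T_b$, there are $\mathfrak{c}$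 many $t$ that are simultaneously an immediate successor of $S_b$ in $T_b$ for all $b\in B$. $R[\mathcal{F}]\subset 2^{\mathcal{T}}$ is the family of all segments of all the trees $T_a$ (a compact set). For an index set $\Gamma$, a compact $K\subset\mathbb{R}^\Gamma$ and a separable metrizable $D$, $f:\Gamma\to D$ is a determining function if for all $x\in K$, compact $C\subset D$ and $\varepsilon>0$, the set $\{\gamma\in f^{-1}(C): |x_\gamma|>\varepsilon\}$ is finite. *)

theory Defs
  imports "HOL-Analysis.Analysis" "HOL-Library.Equipollence" "HOL-Library.FuncSet"
begin

definition tree_preds :: "'t set \<Rightarrow> ('t \<Rightarrow> 't \<Rightarrow> bool) \<Rightarrow> 't \<Rightarrow> 't set" where
  "tree_preds T le t = {s \<in> T. le s t \<and> s \<noteq> t}"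

definition is_tree :: "'t set \<Rightarrow> ('t \<Rightarrow> 't \<Rightarrow> bool) \<Rightarrow> bool" where
  "is_tree T le \<longleftrightarrow>
     (\<forall>x\<in>T. le x x) \<and>
     (\<forall>x\<in>T. \<forall>y\<in>T. le x y \<and> le y x \<longrightarrow> x = y) \<and>
     (\<forall>x\<in>T. \<forall>y\<in>T. \<forall>z\<in>T. le x y \<and> le y z \<longrightarrow> le x z) \<and>
     (\<forall>t\<in>T. (\<forall>x\<in>tree_preds T le t. \<forall>y\<in>tree_preds T le t. le x y \<or> le y x) \<and>
             (\<forall>X. X \<subseteq> tree_preds T le t \<and> X \<noteq> {} \<longrightarrow> (\<exists>m\<in>X. \<forall>x\<in>X. le m x))) \<and>
     (\<exists>r\<in>T. \<forall>t\<in>T. le r t)"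

definition tree_root :: "'t set \<Rightarrow> ('t \<Rightarrow> 't \<Rightarrow> bool) \<Rightarrow> 't" where
  "tree_root T le = (THE r. r \<in> T \<and> (\<forall>t\<in>T. le r t))"

text \<open>Height exactly omega: every predecessor set is finite (order type < omega),
  and every finite order type n is attained.\<close>
definition height_omega :: "'t set \<Rightarrow> ('t \<Rightarrow> 't \<Rightarrow> bool) \<Rightarrow> bool" where
  "height_omega T le \<longleftrightarrow>
     (\<forall>t\<in>T. finite (tree_preds T le t)) \<and> (\<forall>n::nat. \<exists>t\<in>T. card (tree_preds T le t) = n)"

definition immediate_succ :: "'t set \<Rightarrow> ('t \<Rightarrow> 't \<Rightarrow> bool) \<Rightarrow> 't \<Rightarrow> 't \<Rightarrow> bool" where
  "immediate_succ T le t s \<longleftrightarrow> t \<in> T \<and> s \<in> T \<and> le t s \<and> s \<noteq> t \<and>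
     \<not> (\<exists>r\<in>T. le t r \<and> r \<noteq> t \<and> le r s \<and> r \<noteq> s)"

definition is_segment :: "'t set \<Rightarrow> ('t \<Rightarrow> 't \<Rightarrow> bool) \<Rightarrow> 't set \<Rightarrow> bool" where
  "is_segment T le S \<longleftrightarrow> S \<subseteq> T \<and> (\<forall>x\<in>S. \<forall>y\<in>S. le x y \<or> le y x) \<and>
     (\<forall>t\<in>S. \<forall>s\<in>S. \<forall>r\<in>T. le t r \<and> le r s \<longrightarrow> r \<in> S)"

definition is_initial_segment :: "'t set \<Rightarrow> ('t \<Rightarrow> 't \<Rightarrow> bool) \<Rightarrow> 't set \<Rightarrow> bool" where
  "is_initial_segment T le S \<longleftrightarrow> is_segment T le S \<and> tree_root T le \<in> S"

text \<open>t is an immediate successor of the (finite, initial) segment S: S together with t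
  is again an initial segment with t on top, i.e. the strict predecessors of t are exactly S.\<close>
definition succ_of_segment :: "'t set \<Rightarrow> ('t \<Rightarrow> 't \<Rightarrow> bool) \<Rightarrow> 't set \<Rightarrow> 't \<Rightarrow> bool" where
  "succ_of_segment T le S t \<longleftrightarrow> t \<in> T \<and> tree_preds T le t = S"

definition closed_discrete_family :: "(nat \<Rightarrow> nat) set \<Rightarrow> (nat \<Rightarrow> nat) set set" where
  "closed_discrete_family A =
     {X. X \<subseteq> A \<and> closedin (top_of_set A) X \<and> (\<forall>x\<in>X. \<exists>U. open U \<and> U \<inter> X = {x})}"

text \<open>Reznichenko family of trees; nodes live in a type 't into which the index set
  (a subset of the Baire space) is embedded injectively by emb.\<close>
definition reznichenko_family ::
  "(nat \<Rightarrow> nat) set \<Rightarrow> (nat \<Rightarrow> nat) set set \<Rightarrow> ((nat \<Rightarrow> nat) \<Rightarrow> 't)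
     \<Rightarrow> ((nat \<Rightarrow> nat) \<Rightarrow> 't set) \<Rightarrow> ((nat \<Rightarrow> nat) \<Rightarrow> 't \<Rightarrow> 't \<Rightarrow> bool) \<Rightarrow> bool" where
  "reznichenko_family A F emb T le \<longleftrightarrow>
     (\<forall>a\<in>A. is_tree (T a) (le a) \<and> height_omega (T a) (le a) \<and>
        (\<forall>t\<in>T a. {s. immediate_succ (T a) (le a) t s} \<approx> (UNIV :: real set))) \<and>
     (\<forall>a\<in>A. T a \<inter> emb ` A = {emb a} \<and> tree_root (T a) (le a) = emb a) \<and>
     (\<forall>t\<in>(\<Union>a\<in>A. T a). {a\<in>A. t \<in> T a} \<in> F) \<and>
     (\<forall>a\<in>A. \<forall>b\<in>A. a \<noteq> b \<longrightarrow> (\<forall>S S'. is_segment (T a) (le a) S \<and> is_segment (T b) (le b) S'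
          \<longrightarrow> (\<forall>x\<in>S \<inter> S'. \<forall>y\<in>S \<inter> S'. x = y))) \<and>
     (\<forall>B\<in>F. \<forall>Sg. (\<forall>b\<in>B. finite (Sg b) \<and> is_initial_segment (T b) (le b) (Sg b)) \<and>
          (\<forall>b\<in>B. \<forall>b'\<in>B. b \<noteq> b' \<longrightarrow> Sg b \<inter> Sg b' = {}) \<longrightarrow>
          {t. \<forall>b\<in>B. succ_of_segment (T b) (le b) (Sg b) t} \<approx> (UNIV :: real set))"

text \<open>R[F]: all segments of all trees, viewed as points of {0,1}^T inside R^T.\<close>
definition R_family ::
  "(nat \<Rightarrow> nat) set \<Rightarrow> ((nat \<Rightarrow> nat) \<Rightarrow> 't set) \<Rightarrow> ((nat \<Rightarrow> nat) \<Rightarrow> 't \<Rightarrow> 't \<Rightarrow> bool)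
     \<Rightarrow> ('t \<Rightarrow> real) set" where
  "R_family A T le = {indicator S | S. \<exists>a\<in>A. is_segment (T a) (le a) S}"

definition determining_function ::
  "'i set \<Rightarrow> ('i \<Rightarrow> real) set \<Rightarrow> 'd::topological_space set \<Rightarrow> ('i \<Rightarrow> 'd) \<Rightarrow> bool" where
  "determining_function \<Gamma> K D f \<longleftrightarrow> f \<in> \<Gamma> \<rightarrow> D \<and>
     (\<forall>x\<in>K. \<forall>C. compact C \<and> C \<subseteq> D \<longrightarrow>
        (\<forall>\<epsilon>>0. finite {\<gamma>\<in>\<Gamma>. f \<gamma> \<in> C \<and> \<bar>x \<gamma>\<bar> > \<epsilon>}))"

end

theory Submission
  imports Defs
begin


definition nbhd :: "(nat\<Rightarrow>nat) \<Rightarrow> nat \<Rightarrow> (nat\<Rightarrow>nat) set" where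
  "nbhd y k = {z. \<forall>i<k. z i = y i}"

lemma open_nbhd: "open (nbhd y k)"
proof -
  have "nbhd y k = (\<Inter>i\<in>{..<k}. (\<lambda>z. z i) -` {y i})" by (auto simp: nbhd_def)
  moreover have "open ((\<lambda>z::nat\<Rightarrow>nat. z i) -` {y i})" for i
    by (rule open_vimage) (auto simp: open_discrete)
  ultimately show ?thesis by (auto intro!: open_INT)
qed

lemma closed_sing: "closed {y::nat\<Rightarrow>nat}"
proof -
  have "- {y} = (\<Union>i. (\<lambda>z::nat\<Rightarrow>nat. z i) -` (- {y i}))"
  proof (rule set_eqI)
    fix z :: "nat \<Rightarrow> nat"
    show "z \<in> - {y} \<longleftrightarrow> z \<in> (\<Union>i. (\<lambda>z::nat\<Rightarrow>nat. z i) -` (- {y i}))"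
      by (simp add: fun_eq_iff)
  qed
  moreover have "open ((\<lambda>z::nat\<Rightarrow>nat. z i) -` (- {y i}))" for i
    by (rule open_vimage) (auto simp: open_discrete)
  ultimately have "open (- {y})" by (simp only:) (rule open_UN, blast)
  then show ?thesis by (simp add: closed_def)
qed

lemma conv_compact:
  fixes z :: "nat \<Rightarrow> nat \<Rightarrow> nat"
  assumes "\<And>n i. i < n \<Longrightarrow> z n i = y i"
  shows "compact (insert y (range z))"
proof -
  have "limitin (product_topology (\<lambda>i. euclidean) UNIV) z y sequentially"
    unfolding limitin_componentwise
  proof (intro conjI ballI)
    fix i :: nat
    have "eventually (\<lambda>n. z n i = y i) sequentially"
      unfolding eventually_sequentially using assms by (intro exI[of _ "Suc i"]) auto
    then show "limitin euclidean (\<lambda>c. z c i) (y i) sequentially"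
      by (simp add: tendsto_eventually)
  qed auto
  then have "limitin euclidean z y sequentially" by (simp add: euclidean_product_topology)
  then have "compactin euclidean (insert y (range z))"
    by (rule compactin_sequence_with_limit) auto
  then show ?thesis by simp
qed


lemma is_treeD:
  assumes "is_tree T le"
  shows "\<forall>x\<in>T. le x x"
    and "\<forall>x\<in>T. \<forall>y\<in>T. le x y \<and> le y x \<longrightarrow> x = y"
    and "\<forall>x\<in>T. \<forall>y\<in>T. \<forall>z\<in>T. le x y \<and> le y z \<longrightarrow> le x z"
    and "\<forall>t\<in>T. \<forall>x\<in>tree_preds T le t. \<forall>y\<in>tree_preds T le t. le x y \<or> le y x"
    and "\<exists>r\<in>T. \<forall>t\<in>T. le r t"
proof -
  note H = assms[unfolded is_tree_def]
  show "\<forall>x\<in>T. le x x" using H by (rule conjunct1)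
  show "\<forall>x\<in>T. \<forall>y\<in>T. le x y \<and> le y x \<longrightarrow> x = y" using H[THEN conjunct2] by (rule conjunct1)
  show "\<forall>x\<in>T. \<forall>y\<in>T. \<forall>z\<in>T. le x y \<and> le y z \<longrightarrow> le x z" using H[THEN conjunct2, THEN conjunct2] by (rule conjunct1)
  show "\<exists>r\<in>T. \<forall>t\<in>T. le r t" using H[THEN conjunct2, THEN conjunct2, THEN conjunct2] by (rule conjunct2)
  have D: "\<forall>t\<in>T. (\<forall>x\<in>tree_preds T le t. \<forall>y\<in>tree_preds T le t. le x y \<or> le y x) \<and>
             (\<forall>X. X \<subseteq> tree_preds T le t \<and> X \<noteq> {} \<longrightarrow> (\<exists>m\<in>X. \<forall>x\<in>X. le m x))"
    using H[THEN conjunct2, THEN conjunct2, THEN conjunct2] by (rule conjunct1)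
  show "\<forall>t\<in>T. \<forall>x\<in>tree_preds T le t. \<forall>y\<in>tree_preds T le t. le x y \<or> le y x"
  proof
    fix t assume tT: "t \<in> T" show "\<forall>x\<in>tree_preds T le t. \<forall>y\<in>tree_preds T le t. le x y \<or> le y x"
      using bspec[OF D tT] by (rule conjunct1)
  qed
qed

lemma root_props:
  assumes "is_tree T le"
  shows "tree_root T le \<in> T \<and> (\<forall>t\<in>T. le (tree_root T le) t)"
proof -
  from is_treeD(5)[OF assms] obtain r where r: "r \<in> T" "\<forall>t\<in>T. le r t" by blast
  have antis: "\<forall>x\<in>T. \<forall>y\<in>T. le x y \<and> le y x \<longrightarrow> x = y" using is_treeD(2)[OF assms] .
  have u: "r' = r" if "r' \<in> T \<and> (\<forall>t\<in>T. le r' t)" for r'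
  proof -
    have "le r r'" "le r' r" using that r by auto
    then show ?thesis using antis that r(1) by blast
  qed
  have "tree_root T le = r" unfolding tree_root_def
  proof (rule the_equality)
    show "r \<in> T \<and> (\<forall>t\<in>T. le r t)" using r by simp
  qed (rule u)
  then show ?thesis using r by simp
qed

lemma seg_preds:
  assumes "is_tree T le" "t \<in> T"
  shows "is_segment T le (tree_preds T le t \<union> {t})"
proof -
  note refl = is_treeD(1)[OF assms(1)] and trans = is_treeD(3)[OF assms(1)]
    and ch = bspec[OF is_treeD(4)[OF assms(1)] assms(2)]
  have sub: "tree_preds T le t \<union> {t} \<subseteq> T" using assms(2) by (auto simp: tree_preds_def)
  have lt: "le x t" if "x \<in> tree_preds T le t \<union> {t}" for x
    using that refl assms(2) by (auto simp: tree_preds_def)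
  show ?thesis unfolding is_segment_def
  proof (intro conjI ballI impI sub)
    fix x y assume x: "x \<in> tree_preds T le t \<union> {t}" and y: "y \<in> tree_preds T le t \<union> {t}"
    show "le x y \<or> le y x"
    proof (cases "x = t")
      case True then show ?thesis using lt[OF y] by simp
    next
      case False
      show ?thesis
      proof (cases "y = t")
        case True then show ?thesis using lt[OF x] by simp
      next
        case False
        then have "y \<in> tree_preds T le t" using y by simp
        moreover have "x \<in> tree_preds T le t" using x \<open>x \<noteq> t\<close> by simp
        ultimately show ?thesis using ch by blast
      qed
    qed
  next
    fix a s r assume a: "a \<in> tree_preds T le t \<union> {t}" and s: "s \<in> tree_preds T le t \<union> {t}"
      and r: "r \<in> T" and h: "le a r \<and> le r s"
    have st: "le s t" "s \<in> T" using lt[OF s] sub s by auto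
    have "le r t" using trans[rule_format, OF r st(2) assms(2)] h st(1) by blast
    then show "r \<in> tree_preds T le t \<union> {t}" using r by (auto simp: tree_preds_def)
  qed
qed

lemma seg_root:
  assumes "is_tree T le"
  shows "is_initial_segment T le {tree_root T le}"
proof -
  have R: "tree_root T le \<in> T" "\<forall>t\<in>T. le (tree_root T le) t" using root_props[OF assms] by auto
  have antis: "\<forall>x\<in>T. \<forall>y\<in>T. le x y \<and> le y x \<longrightarrow> x = y" using is_treeD(2)[OF assms] .
  show ?thesis unfolding is_initial_segment_def is_segment_def
  proof (intro conjI)
    show "{tree_root T le} \<subseteq> T" using R by simp
    show "\<forall>x\<in>{tree_root T le}. \<forall>y\<in>{tree_root T le}. le x y \<or> le y x" using R by simp
    show "\<forall>t\<in>{tree_root T le}. \<forall>s\<in>{tree_root T le}. \<forall>r\<in>T. le t r \<and> le r s \<longrightarrow> r \<in> {tree_root T le}"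
    proof (intro ballI impI)
      fix t s r assume "t \<in> {tree_root T le}" "s \<in> {tree_root T le}" "r \<in> T" "le t r \<and> le r s"
      then show "r \<in> {tree_root T le}" using antis R(1) by blast
    qed
  qed simp
qed

lemma seg_union:
  assumes "\<And>n. is_segment T le (S n)" "\<And>n. S n \<subseteq> S (Suc n)"
  shows "is_segment T le (\<Union>n. S n)"
proof -
  have mono: "S m \<subseteq> S n" if "m \<le> n" for m n
    using lift_Suc_mono_le[of S, OF assms(2) that] .
  show ?thesis unfolding is_segment_def
  proof (intro conjI ballI impI)
    show "(\<Union>n. S n) \<subseteq> T" using assms(1) unfolding is_segment_def by blast
  next
    fix x y assume "x \<in> (\<Union>n. S n)" "y \<in> (\<Union>n. S n)"
    then obtain m n where "x \<in> S m" "y \<in> S n" by auto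
    then have "x \<in> S (max m n)" "y \<in> S (max m n)" using mono[of m "max m n"] mono[of n "max m n"] by auto
    then show "le x y \<or> le y x" using assms(1)[of "max m n"] unfolding is_segment_def by blast
  next
    fix x y r assume "x \<in> (\<Union>n. S n)" "y \<in> (\<Union>n. S n)" "r \<in> T" "le x r \<and> le r y"
    moreover obtain m n where "x \<in> S m" "y \<in> S n" using calculation by auto
    ultimately have "x \<in> S (max m n)" "y \<in> S (max m n)" using mono[of m "max m n"] mono[of n "max m n"] by auto
    then have "r \<in> S (max m n)" using assms(1)[of "max m n"] \<open>r \<in> T\<close> \<open>le x r \<and> le r y\<close> unfolding is_segment_def by blast
    then show "r \<in> (\<Union>n. S n)" by blast
  qed
qed

lemma nbhd_self: "y \<in> nbhd y k" by (simp add: nbhd_def)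

lemma map_upt_eq: "map y [0..<n] = map x [0..<n] \<longleftrightarrow> (\<forall>i<n. y i = x i)"
  by (auto simp: list_eq_iff_nth_eq)

lemma cover:
  fixes A :: "(nat\<Rightarrow>nat) set" and k :: "(nat\<Rightarrow>nat) \<Rightarrow> nat"
  assumes "A \<noteq> {}"
  shows "\<exists>B. B \<subseteq> A \<and> B \<noteq> {} \<and> countable B \<and> B \<in> closed_discrete_family A \<and>
             (\<forall>x\<in>A. \<exists>y\<in>B. x \<in> nbhd y (k y))"
proof -
  define kmin where "kmin x = (LEAST j. \<exists>y\<in>A. k y = j \<and> x \<in> nbhd y j)" for x
  define g where "g l = (SOME y. y \<in> A \<and> k y = length l \<and> map y [0..<length l] = l)" for l :: "nat list"
  define rep where "rep x = g (map x [0..<kmin x])" for x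
  define B where "B = rep ` A"
  have K1: "\<exists>y\<in>A. k y = kmin x \<and> x \<in> nbhd y (kmin x)" if "x \<in> A" for x
  proof -
    have "\<exists>y\<in>A. k y = k x \<and> x \<in> nbhd y (k x)" using that nbhd_self by blast
    then show ?thesis unfolding kmin_def by (rule LeastI)
  qed
  have K2: "kmin x \<le> k y" if "y \<in> A" "x \<in> nbhd y (k y)" for x y
    unfolding kmin_def using that by (intro Least_le) blast
  have R1: "rep x \<in> A \<and> k (rep x) = kmin x \<and> x \<in> nbhd (rep x) (kmin x)" if xA: "x \<in> A" for x
  proof -
    obtain y where y: "y \<in> A" "k y = kmin x" "x \<in> nbhd y (kmin x)" using K1[OF xA] by blast
    let ?l = "map x [0..<kmin x]"
    have "y \<in> A \<and> k y = length ?l \<and> map y [0..<length ?l] = ?l"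
      using y by (simp add: map_upt_eq nbhd_def)
    then have "g ?l \<in> A \<and> k (g ?l) = length ?l \<and> map (g ?l) [0..<length ?l] = ?l"
      unfolding g_def by (rule someI[where P="\<lambda>y. y \<in> A \<and> k y = length ?l \<and> map y [0..<length ?l] = ?l"])
    then show ?thesis unfolding rep_def by (simp add: map_upt_eq nbhd_def)
  qed
  have R2: "rep z = rep x" if hh: "x \<in> A" "z \<in> A" "z \<in> nbhd (rep x) (k (rep x))" for x z
  proof -
    have rx: "rep x \<in> A" "k (rep x) = kmin x" "x \<in> nbhd (rep x) (kmin x)" using R1[OF that(1)] by auto
    have le1: "kmin z \<le> kmin x" using K2[OF rx(1) that(3)] rx(2) by simp
    obtain y' where y': "y' \<in> A" "k y' = kmin z" "z \<in> nbhd y' (kmin z)" using K1[OF hh(2)] by blast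
    have agree: "\<forall>i<kmin x. z i = x i" using that(3) rx by (simp add: nbhd_def)
    have "x \<in> nbhd y' (k y')" using y' agree le1 by (auto simp: nbhd_def)
    then have "kmin x \<le> kmin z" using K2[OF y'(1)] y'(2) by simp
    then have eq: "kmin x = kmin z" using le1 by simp
    have "map z [0..<kmin z] = map x [0..<kmin x]" using eq agree by (simp add: map_upt_eq)
    then show ?thesis unfolding rep_def by simp
  qed
  have U: "b = b'" if hh: "z \<in> A" "b \<in> B" "b' \<in> B" "z \<in> nbhd b (k b)" "z \<in> nbhd b' (k b')" for z b b'
  proof -
    obtain x where x: "x \<in> A" "b = rep x" using hh(2) B_def by blast
    obtain x' where x': "x' \<in> A" "b' = rep x'" using hh(3) B_def by blast
    have "rep z = b" using R2[OF x(1) that(1)] that(4) x(2) by simp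
    moreover have "rep z = b'" using R2[OF x'(1) that(1)] that(5) x'(2) by simp
    ultimately show ?thesis by simp
  qed
  have BA: "B \<subseteq> A" using R1 B_def by auto
  have cov: "\<forall>x\<in>A. \<exists>y\<in>B. x \<in> nbhd y (k y)"
  proof
    fix x assume "x \<in> A"
    then show "\<exists>y\<in>B. x \<in> nbhd y (k y)" using R1[of x] B_def by (intro bexI[of _ "rep x"]) auto
  qed
  have cB: "countable B"
  proof -
    have "B \<subseteq> range g" unfolding B_def rep_def by auto
    moreover have "countable (range g)" by simp
    ultimately show ?thesis by (rule countable_subset)
  qed
  have disc: "\<forall>x\<in>B. \<exists>V. open V \<and> V \<inter> B = {x}"
  proof
    fix b assume b: "b \<in> B"
    have "nbhd b (k b) \<inter> B = {b}"
    proof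
      show "{b} \<subseteq> nbhd b (k b) \<inter> B" using b nbhd_self by auto
      show "nbhd b (k b) \<inter> B \<subseteq> {b}"
      proof
        fix b' assume "b' \<in> nbhd b (k b) \<inter> B"
        then show "b' \<in> {b}" using U[of b' b' b] b BA nbhd_self by auto
      qed
    qed
    then show "\<exists>V. open V \<and> V \<inter> B = {b}" using open_nbhd by blast
  qed
  define Oset where "Oset = (\<Union>b\<in>B. nbhd b (k b) - {b})"
  have clo: "closedin (top_of_set A) B"
    unfolding closedin_closed
  proof (intro exI[of _ "- Oset"] conjI)
    have "open Oset" unfolding Oset_def using open_nbhd closed_sing by (intro open_UN ballI open_Diff) auto
    then show "closed (- Oset)" by (simp add: closed_def)
    show "B = A \<inter> - Oset"
    proof
      show "B \<subseteq> A \<inter> - Oset"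
      proof
        fix b assume b: "b \<in> B"
        have "b \<notin> nbhd b' (k b') - {b'}" if "b' \<in> B" for b'
          using U[of b b' b] that b BA nbhd_self by auto
        then show "b \<in> A \<inter> - Oset" using b BA Oset_def by auto
      qed
      show "A \<inter> - Oset \<subseteq> B"
      proof
        fix x assume x: "x \<in> A \<inter> - Oset"
        then have xA: "x \<in> A" by simp
        have rB: "rep x \<in> B" using xA B_def by simp
        have "x \<in> nbhd (rep x) (k (rep x))" using R1[OF xA] by simp
        then have "x = rep x" using x rB Oset_def by blast
        then show "x \<in> B" using rB by simp
      qed
    qed
  qed
  show ?thesis
    using BA cB cov disc clo assms B_def unfolding closed_discrete_family_def by (intro exI[of _ B]) auto
qed


definition Eset :: "((nat\<Rightarrow>nat) \<Rightarrow> 't set) \<Rightarrow> ((nat\<Rightarrow>nat) \<Rightarrow> 't \<Rightarrow> 't \<Rightarrow> bool) \<Rightarrow> ('t \<Rightarrow> nat \<Rightarrow> nat)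
    \<Rightarrow> (nat\<Rightarrow>nat) \<Rightarrow> 't set \<Rightarrow> nat \<Rightarrow> 't set" where
  "Eset T le f y S k = {t. succ_of_segment (T y) (le y) S t \<and> f t \<in> nbhd y k}"

definition goodk :: "((nat\<Rightarrow>nat) \<Rightarrow> 't set) \<Rightarrow> ((nat\<Rightarrow>nat) \<Rightarrow> 't \<Rightarrow> 't \<Rightarrow> bool) \<Rightarrow> ((nat\<Rightarrow>nat) \<Rightarrow> 't)
    \<Rightarrow> ('t \<Rightarrow> nat \<Rightarrow> nat) \<Rightarrow> (nat\<Rightarrow>nat) \<Rightarrow> nat \<Rightarrow> bool" where
  "goodk T le emb f y k \<longleftrightarrow> (\<forall>N. countable N \<and> emb y \<notin> N \<longrightarrow>
     (\<exists>S. finite S \<and> is_initial_segment (T y) (le y) S \<and> S \<inter> N = {} \<and> countable (Eset T le f y S k)))"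

lemma exists_goodk:
  fixes f :: "'t \<Rightarrow> nat \<Rightarrow> nat"
  assumes tree: "is_tree (T y) (le y)" and root: "tree_root (T y) (le y) = emb y"
    and yA: "y \<in> A" and fmap: "\<forall>t\<in>T y. f t \<in> A" and TG: "T y \<subseteq> \<Gamma>"
    and det: "\<forall>x\<in>R_family A T le. \<forall>C. compact C \<and> C \<subseteq> A \<longrightarrow>
        (\<forall>\<epsilon>>0. finite {\<gamma>\<in>\<Gamma>. f \<gamma> \<in> C \<and> \<bar>x \<gamma>\<bar> > \<epsilon>})"
  shows "\<exists>k. goodk T le emb f y k"
proof (rule ccontr)
  assume nk: "\<not> (\<exists>k. goodk T le emb f y k)"
  have ex: "\<exists>N. countable N \<and> emb y \<notin> N \<and> (\<forall>S. finite S \<and> is_initial_segment (T y) (le y) S \<and> S \<inter> N = {}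
      \<longrightarrow> \<not> countable (Eset T le f y S k))" for k
  proof -
    have "\<not> goodk T le emb f y k" using nk by blast
    then have "\<exists>N. (countable N \<and> emb y \<notin> N) \<and> \<not> (\<exists>S. finite S \<and> is_initial_segment (T y) (le y) S \<and> S \<inter> N = {} \<and> countable (Eset T le f y S k))"
      unfolding goodk_def not_all not_imp .
    then obtain N where N: "countable N" "emb y \<notin> N"
      and nS: "\<not> (\<exists>S. finite S \<and> is_initial_segment (T y) (le y) S \<and> S \<inter> N = {} \<and> countable (Eset T le f y S k))"
      by (elim exE conjE)
    have "\<forall>S. finite S \<and> is_initial_segment (T y) (le y) S \<and> S \<inter> N = {} \<longrightarrow> \<not> countable (Eset T le f y S k)"
    proof (intro allI impI)
      fix S assume "finite S \<and> is_initial_segment (T y) (le y) S \<and> S \<inter> N = {}"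
      then show "\<not> countable (Eset T le f y S k)" using nS by (elim conjE) (intro notI, elim notE, intro exI conjI)
    qed
    then show ?thesis using N by (intro exI[of _ N] conjI)
  qed
  have all: "\<forall>k. \<exists>N. countable N \<and> emb y \<notin> N \<and> (\<forall>S. finite S \<and> is_initial_segment (T y) (le y) S \<and> S \<inter> N = {}
      \<longrightarrow> \<not> countable (Eset T le f y S k))" by (rule allI) (rule ex)
  from choice[OF all] obtain Nk where Nk0: "\<forall>k. countable (Nk k) \<and> emb y \<notin> Nk k \<and> (\<forall>S. finite S \<and> is_initial_segment (T y) (le y) S \<and> S \<inter> Nk k = {}
      \<longrightarrow> \<not> countable (Eset T le f y S k))"
    by (elim exE) (rule that, assumption)
  have Nk: "countable (Nk k) \<and> emb y \<notin> Nk k \<and> (\<forall>S. finite S \<and> is_initial_segment (T y) (le y) S \<and> S \<inter> Nk k = {}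
      \<longrightarrow> \<not> countable (Eset T le f y S k))" for k
    using Nk0 by (rule spec)
  define N where "N = (\<Union>k. Nk k)"
  have cN: "countable N" unfolding N_def using Nk by blast
  have eN: "emb y \<notin> N" unfolding N_def using Nk by blast
  define Ss where "Ss = rec_nat {emb y} (\<lambda>n S. S \<union> {SOME t. t \<in> Eset T le f y S n - N})"
  define tt where "tt n = (SOME t. t \<in> Eset T le f y (Ss n) n - N)" for n
  have Ss0: "Ss 0 = {emb y}" unfolding Ss_def by simp
  have SsS: "Ss (Suc n) = Ss n \<union> {tt n}" for n unfolding Ss_def tt_def by simp
  have ttin: "tt n \<in> Eset T le f y (Ss n) n - N"
    if inv: "finite (Ss n) \<and> is_initial_segment (T y) (le y) (Ss n) \<and> Ss n \<inter> N = {}" for n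
  proof -
    have "Ss n \<inter> Nk n = {}" using inv unfolding N_def by blast
    then have unc: "\<not> countable (Eset T le f y (Ss n) n)" using Nk[of n] inv by blast
    have "Eset T le f y (Ss n) n - N \<noteq> {}"
    proof
      assume "Eset T le f y (Ss n) n - N = {}"
      then have "Eset T le f y (Ss n) n \<subseteq> N" by blast
      then show False using unc cN countable_subset by blast
    qed
    then obtain t0 where "t0 \<in> Eset T le f y (Ss n) n - N" by blast
    then show ?thesis unfolding tt_def by (rule someI)
  qed
  have inv: "finite (Ss n) \<and> is_initial_segment (T y) (le y) (Ss n) \<and> Ss n \<inter> N = {}" for n
  proof (induction n)
    case 0
    show ?case using seg_root[OF tree] root eN Ss0 by simp
  next
    case (Suc n)
    have t: "tt n \<in> Eset T le f y (Ss n) n - N" using ttin[OF Suc] .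
    then have tT: "tt n \<in> T y" and pr: "tree_preds (T y) (le y) (tt n) = Ss n"
      by (auto simp: Eset_def succ_of_segment_def)
    have seg: "is_segment (T y) (le y) (Ss (Suc n))"
      using seg_preds[OF tree tT] pr SsS by simp
    have "tree_root (T y) (le y) \<in> Ss (Suc n)" using Suc SsS unfolding is_initial_segment_def by blast
    then show ?case using seg Suc SsS t unfolding is_initial_segment_def by auto
  qed
  have ttE: "tt n \<in> Eset T le f y (Ss n) n" for n using ttin[OF inv] by blast
  have tT: "tt n \<in> T y" and pr: "tree_preds (T y) (le y) (tt n) = Ss n" for n
    using ttE[of n] by (auto simp: Eset_def succ_of_segment_def)
  have fn: "f (tt n) \<in> nbhd y n" for n using ttE[of n] by (simp add: Eset_def)
  have mono: "Ss m \<subseteq> Ss n" if "m \<le> n" for m n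
    using lift_Suc_mono_le[of Ss, OF _ that] SsS by blast
  define Seg where "Seg = (\<Union>n. Ss n)"
  have segS: "is_segment (T y) (le y) Seg"
    unfolding Seg_def using inv SsS unfolding is_initial_segment_def by (intro seg_union) auto
  have xR: "indicator Seg \<in> R_family A T le"
    unfolding R_family_def mem_Collect_eq using segS yA by blast
  define C where "C = insert y (range (\<lambda>n. f (tt n)))"
  have cC: "compact C" unfolding C_def
    by (rule conv_compact) (use fn in \<open>auto simp: nbhd_def\<close>)
  have CA: "C \<subseteq> A" unfolding C_def using yA fmap tT by auto
  have fin: "finite {\<gamma>\<in>\<Gamma>. f \<gamma> \<in> C \<and> \<bar>(indicator Seg :: 't \<Rightarrow> real) \<gamma>\<bar> > 1/2}"
    using det[rule_format, OF xR conjI[OF cC CA], of "1/2"] by simp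
  have "range tt \<subseteq> {\<gamma>\<in>\<Gamma>. f \<gamma> \<in> C \<and> \<bar>(indicator Seg :: 't \<Rightarrow> real) \<gamma>\<bar> > 1/2}"
  proof
    fix g assume "g \<in> range tt"
    then obtain n where g: "g = tt n" by blast
    have "g \<in> Seg" unfolding Seg_def g using SsS by blast
    then show "g \<in> {\<gamma>\<in>\<Gamma>. f \<gamma> \<in> C \<and> \<bar>(indicator Seg :: 't \<Rightarrow> real) \<gamma>\<bar> > 1/2}"
      using g tT TG C_def by auto
  qed
  moreover have "inj tt"
  proof (rule linorder_injI)
    fix m n :: nat assume mn: "m < n"
    have "tt m \<in> Ss n" using mono[of "Suc m" n] mn SsS by auto
    then have "tt m \<in> tree_preds (T y) (le y) (tt n)" using pr by simp
    then show "tt m \<noteq> tt n" by (auto simp: tree_preds_def)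
  qed
  ultimately show False using fin range_inj_infinite finite_subset by blast
qed


lemma reznD:
  assumes "reznichenko_family A F emb T le"
  shows "\<forall>a\<in>A. is_tree (T a) (le a)"
    and "\<forall>a\<in>A. T a \<inter> emb ` A = {emb a} \<and> tree_root (T a) (le a) = emb a"
    and "\<forall>B\<in>F. \<forall>Sg. (\<forall>b\<in>B. finite (Sg b) \<and> is_initial_segment (T b) (le b) (Sg b)) \<and>
          (\<forall>b\<in>B. \<forall>b'\<in>B. b \<noteq> b' \<longrightarrow> Sg b \<inter> Sg b' = {}) \<longrightarrow>
          {t. \<forall>b\<in>B. succ_of_segment (T b) (le b) (Sg b) t} \<approx> (UNIV :: real set)"
proof -
  note H = assms[unfolded reznichenko_family_def]
  have C1: "\<forall>a\<in>A. is_tree (T a) (le a) \<and> height_omega (T a) (le a) \<and>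
        (\<forall>t\<in>T a. {s. immediate_succ (T a) (le a) t s} \<approx> (UNIV :: real set))"
    using H by (rule conjunct1)
  show "\<forall>a\<in>A. is_tree (T a) (le a)"
  proof
    fix a assume aA: "a \<in> A"
    show "is_tree (T a) (le a)" using bspec[OF C1 aA] by (rule conjunct1)
  qed
  show "\<forall>a\<in>A. T a \<inter> emb ` A = {emb a} \<and> tree_root (T a) (le a) = emb a"
    using H[THEN conjunct2] by (rule conjunct1)
  show "\<forall>B\<in>F. \<forall>Sg. (\<forall>b\<in>B. finite (Sg b) \<and> is_initial_segment (T b) (le b) (Sg b)) \<and>
          (\<forall>b\<in>B. \<forall>b'\<in>B. b \<noteq> b' \<longrightarrow> Sg b \<inter> Sg b' = {}) \<longrightarrow>
          {t. \<forall>b\<in>B. succ_of_segment (T b) (le b) (Sg b) t} \<approx> (UNIV :: real set)"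
    using H[THEN conjunct2, THEN conjunct2, THEN conjunct2] by (rule conjunct2)
qed

theorem theorem4p2:
  fixes A :: "(nat \<Rightarrow> nat) set"
    and emb :: "(nat \<Rightarrow> nat) \<Rightarrow> 't"
    and T :: "(nat \<Rightarrow> nat) \<Rightarrow> 't set"
    and le :: "(nat \<Rightarrow> nat) \<Rightarrow> 't \<Rightarrow> 't \<Rightarrow> bool"
  assumes "A \<noteq> {}"
    and "inj emb"
    and "reznichenko_family A (closed_discrete_family A) emb T le"
  shows "\<not> (\<exists>f. determining_function (\<Union>a\<in>A. T a) (R_family A T le) A f)"
proof
  assume "\<exists>f. determining_function (\<Union>a\<in>A. T a) (R_family A T le) A f"
  then obtain f where df: "determining_function (\<Union>a\<in>A. T a) (R_family A T le) A f" by (rule exE)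
  note DF = df[unfolded determining_function_def]
  have fmap: "f \<in> (\<Union>a\<in>A. T a) \<rightarrow> A" using DF by (rule conjunct1)
  have det: "\<forall>x\<in>R_family A T le. \<forall>C. compact C \<and> C \<subseteq> A \<longrightarrow>
        (\<forall>\<epsilon>>0. finite {\<gamma>\<in>(\<Union>a\<in>A. T a). f \<gamma> \<in> C \<and> \<bar>x \<gamma>\<bar> > \<epsilon>})" using DF by (rule conjunct2)
  note R1 = reznD(1)[OF assms(3)] and R2 = reznD(2)[OF assms(3)] and R5 = reznD(3)[OF assms(3)]
  have gk: "\<forall>y\<in>A. \<exists>k. goodk T le emb f y k"
  proof
    fix y assume yA: "y \<in> A"
    have fm: "\<forall>t\<in>T y. f t \<in> A" using fmap yA by blast
    show "\<exists>k. goodk T le emb f y k"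
      by (rule exists_goodk[where A=A and \<Gamma>="\<Union>a\<in>A. T a"])
        (use R1 R2 yA fm det in auto)
  qed
  from bchoice[OF gk] obtain kf where kf: "\<forall>y\<in>A. goodk T le emb f y (kf y)"
    by (elim exE) (rule that, assumption)
  from cover[OF assms(1), of kf] obtain B where B: "B \<subseteq> A" "B \<noteq> {}" "countable B"
    "B \<in> closed_discrete_family A" "\<forall>x\<in>A. \<exists>y\<in>B. x \<in> nbhd y (kf y)"
    by (elim exE conjE) (rule that; assumption)
  define bb where "bb = from_nat_into B"
  have rbb: "range bb = B" using B by (simp add: bb_def)
  have bbB: "bb n \<in> B" for n using B(2) by (simp add: bb_def from_nat_into)
  define ch where "ch n U = (SOME S. finite S \<and> is_initial_segment (T (bb n)) (le (bb n)) S \<and>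
      S \<inter> (U - {emb (bb n)}) = {} \<and> countable (Eset T le f (bb n) S (kf (bb n))))" for n U
  have chP: "finite (ch n U) \<and> is_initial_segment (T (bb n)) (le (bb n)) (ch n U) \<and>
      ch n U \<inter> (U - {emb (bb n)}) = {} \<and> countable (Eset T le f (bb n) (ch n U) (kf (bb n)))"
    if cU: "countable U" for n U
  proof -
    have "goodk T le emb f (bb n) (kf (bb n))" using kf bbB B(1) by blast
    then have g: "\<forall>N. countable N \<and> emb (bb n) \<notin> N \<longrightarrow> (\<exists>S. finite S \<and> is_initial_segment (T (bb n)) (le (bb n)) S \<and>
        S \<inter> N = {} \<and> countable (Eset T le f (bb n) S (kf (bb n))))"
      unfolding goodk_def .
    have cu: "countable (U - {emb (bb n)})" using countable_subset[OF Diff_subset cU] .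
    have ex: "\<exists>S. finite S \<and> is_initial_segment (T (bb n)) (le (bb n)) S \<and>
        S \<inter> (U - {emb (bb n)}) = {} \<and> countable (Eset T le f (bb n) S (kf (bb n)))"
      by (rule mp[OF spec[OF g, of "U - {emb (bb n)}"]]) (use cu in simp)
    then show ?thesis unfolding ch_def by (rule someI_ex)
  qed
  define UU where "UU = rec_nat {} (\<lambda>n U. U \<union> ch n U)"
  have UUS: "UU (Suc n) = UU n \<union> ch n (UU n)" for n by (simp add: UU_def)
  have cUU: "countable (UU n)" for n
  proof (induction n)
    case 0 then show ?case by (simp add: UU_def)
  next
    case (Suc n)
    have "finite (ch n (UU n))" using chP[OF Suc] by blast
    then show ?case using Suc UUS by (simp add: countable_finite)
  qed
  have chn: "finite (ch n (UU n)) \<and> is_initial_segment (T (bb n)) (le (bb n)) (ch n (UU n)) \<and>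
      ch n (UU n) \<inter> (UU n - {emb (bb n)}) = {} \<and> countable (Eset T le f (bb n) (ch n (UU n)) (kf (bb n)))" for n
    using chP[OF cUU] .
  have UUmono: "UU m \<subseteq> UU n" if "m \<le> n" for m n
    using lift_Suc_mono_le[of UU, OF _ that] UUS by blast
  define idx where "idx b = (LEAST n. bb n = b)" for b
  have bbidx: "bb (idx b) = b" if "b \<in> B" for b
  proof -
    have "\<exists>n. bb n = b" using that rbb by blast
    then show ?thesis unfolding idx_def by (rule LeastI_ex)
  qed
  define Sg where "Sg b = ch (idx b) (UU (idx b))" for b
  have SgP: "finite (Sg b) \<and> is_initial_segment (T b) (le b) (Sg b) \<and>
      Sg b \<inter> (UU (idx b) - {emb b}) = {} \<and> countable (Eset T le f b (Sg b) (kf b))" if "b \<in> B" for b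
    using chn[of "idx b"] by (simp only: bbidx[OF that] Sg_def)
  have disj_lt: "Sg b \<inter> Sg b' = {}" if bb': "b \<in> B" "b' \<in> B" "idx b < idx b'" for b b'
  proof -
    have "Sg b \<subseteq> UU (Suc (idx b))" using UUS Sg_def by auto
    also have "\<dots> \<subseteq> UU (idx b')" using UUmono bb'(3) by simp
    finally have s1: "Sg b \<subseteq> UU (idx b')" .
    have s2: "Sg b' \<inter> (UU (idx b') - {emb b'}) = {}" using SgP[OF bb'(2)] by simp
    have ne: "emb b' \<notin> Sg b"
    proof
      assume "emb b' \<in> Sg b"
      then have "emb b' \<in> T b" using SgP[OF bb'(1)] unfolding is_initial_segment_def is_segment_def by blast
      moreover have "emb b' \<in> emb ` A" using bb'(2) B(1) by blast
      moreover have "T b \<inter> emb ` A = {emb b}" using R2 bb'(1) B(1) by blast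
      ultimately have "emb b' = emb b" by blast
      then have "b' = b" using injD[OF assms(2)] by blast
      then show False using bb'(3) by simp
    qed
    show ?thesis using s1 s2 ne by blast
  qed
  have disj: "\<forall>b\<in>B. \<forall>b'\<in>B. b \<noteq> b' \<longrightarrow> Sg b \<inter> Sg b' = {}"
  proof (intro ballI impI)
    fix b b' assume h: "b \<in> B" "b' \<in> B" "b \<noteq> b'"
    have "idx b \<noteq> idx b'" using bbidx[OF h(1)] bbidx[OF h(2)] h(3) by metis
    then have "idx b < idx b' \<or> idx b' < idx b" by arith
    then show "Sg b \<inter> Sg b' = {}"
      using disj_lt[OF h(1) h(2)] disj_lt[OF h(2) h(1)] by blast
  qed
  have G: "{t. \<forall>b\<in>B. succ_of_segment (T b) (le b) (Sg b) t} \<approx> (UNIV :: real set)"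
  proof (rule mp[OF spec[OF bspec[OF R5 B(4)], of Sg]], intro conjI)
    show "\<forall>b\<in>B. finite (Sg b) \<and> is_initial_segment (T b) (le b) (Sg b)" using SgP by blast
    show "\<forall>b\<in>B. \<forall>b'\<in>B. b \<noteq> b' \<longrightarrow> Sg b \<inter> Sg b' = {}" by (rule disj)
  qed
  have Gsub: "{t. \<forall>b\<in>B. succ_of_segment (T b) (le b) (Sg b) t} \<subseteq> (\<Union>b\<in>B. Eset T le f b (Sg b) (kf b))"
  proof
    fix t assume t: "t \<in> {t. \<forall>b\<in>B. succ_of_segment (T b) (le b) (Sg b) t}"
    obtain b0 where b0: "b0 \<in> B" using B(2) by blast
    have "t \<in> T b0" using t b0 by (simp add: succ_of_segment_def)
    then have "f t \<in> A" using fmap b0 B(1) by blast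
    then obtain y where y: "y \<in> B" "f t \<in> nbhd y (kf y)" using B(5) by blast
    have "t \<in> Eset T le f y (Sg y) (kf y)" using t y by (simp add: Eset_def)
    then show "t \<in> (\<Union>b\<in>B. Eset T le f b (Sg b) (kf b))" using y(1) by blast
  qed
  have "countable (\<Union>b\<in>B. Eset T le f b (Sg b) (kf b))" using B(3) SgP by (intro countable_UN) auto
  then have "countable {t. \<forall>b\<in>B. succ_of_segment (T b) (le b) (Sg b) t}" using Gsub countable_subset by blast
  then have "countable (UNIV :: real set)" using countable_eqpoll eqpoll_sym[OF G] by blast
  then show False using uncountable_UNIV_real by simp
qed

end
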